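(* Let $L,M,N\in\mathbb N$, let $\vec B_1$ be a binary digit vector of length (scale factor) $N^L$ and $\vec B_2$ a binary digit vector of length $N^M$. If $\vec B_1\otimes\vec B_2=\vec B_2\otimes\vec B_1$, then $F_{\vec B_1}=F_{\vec B_2}$.
   Context: A binary digit vector of length (scale factor) $K\ge3$ is $\vec B=(b_0,\dots,b_{K-1})\in\{0,1\}^K$ with $2\le\|\vec B\|:=\sum_i b_i\le K-1$; its digit set is $D=\{i:b_i=1\}$. With $\phi_d(x)=(x+d)/K$ for $d\in D$, let $\mu_{\vec B}$ be the unique Borel probability measure with $\mu_{\vec B}=\frac{1}{\|\vec B\|}\sum_{d\in D}\mu_{\vec B}\circ\phi_d^{-1}$, supported on the attractor $C_{\vec B}\subset[0,1]$; the CDF is $F_{\vec B}(x)=\mu_{\vec B}([0,x])$. For binary vectors $\vec B=(b_0,\dots,b_{P-1})$ and $\vec C=(c_0,\dots,c_{Q-1})$, the Kronecker product $\vec B\otimes\vec C$ is the vector of length $PQ$ with $(\vec B\otimes\vec C)(n+mQ)=b_mc_n$ for $0\le n\le Q-1$, $0\le m\le P-1$. *)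

theory Defs
  imports "HOL-Probability.Probability"
begin

definition is_bdv :: "nat list \<Rightarrow> bool" where
  "is_bdv B \<longleftrightarrow> length B \<ge> 3 \<and> set B \<subseteq> {0, 1} \<and>
     2 \<le> sum_list B \<and> sum_list B \<le> length B - 1"

definition digits :: "nat list \<Rightarrow> nat set" where
  "digits B = {i. i < length B \<and> B ! i = 1}"

definition phi :: "nat \<Rightarrow> nat \<Rightarrow> real \<Rightarrow> real" where
  "phi K d x = (x + real d) / real K"

definition bdv_measure :: "nat list \<Rightarrow> real measure" where
  "bdv_measure B = (THE M. prob_space M \<and> sets M = sets borel \<and>
     (\<forall>A\<in>sets borel. measure M A =
        (\<Sum>d\<in>digits B. measure M (phi (length B) d -` A)) / real (sum_list B)))"

definition bdv_cdf :: "nat list \<Rightarrow> real \<Rightarrow> real" where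
  "bdv_cdf B x = measure (bdv_measure B) {0..x}"

definition kron :: "nat list \<Rightarrow> nat list \<Rightarrow> nat list" where
  "kron B C = map (\<lambda>i. B ! (i div length C) * C ! (i mod length C))
                  [0..<length B * length C]"

end

theory Submission
  imports Defs
begin

definition T :: "nat list \<Rightarrow> (real \<Rightarrow> real) \<Rightarrow> real \<Rightarrow> real" where
  "T B G t = (\<Sum>d\<in>digits B. G (real (length B) * t - real d)) / real (sum_list B)"

lemma finite_digits[simp]: "finite (digits B)"
  unfolding digits_def by auto

lemma sum_list_card:
  assumes "set B \<subseteq> {0,1}"
  shows "sum_list B = card (digits B)"
proof -
  have "sum_list B = (\<Sum>i=0..<length B. B ! i)" by (simp add: sum_list_sum_nth)
  also have "\<dots> = (\<Sum>i\<in>{0..<length B}. if B ! i = 1 then 1 else 0)"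
  proof (rule sum.cong)
    fix i assume "i \<in> {0..<length B}"
    then have "B ! i \<in> {0,1}" using assms nth_mem by fastforce
    then show "B ! i = (if B ! i = 1 then 1 else 0)" by auto
  qed simp
  also have "\<dots> = card ({0..<length B} \<inter> {i. B ! i = 1})"
    by (simp add: sum.If_cases)
  also have "{0..<length B} \<inter> {i. B ! i = 1} = digits B" by (auto simp: digits_def)
  finally show ?thesis .
qed

lemma T_diff: "T B (\<lambda>x. G x - H x) t = T B G t - T B H t"
  unfolding T_def by (simp add: sum_subtractf diff_divide_distrib)

lemma kron_length: "length (kron B C) = length B * length C"
  by (simp add: kron_def)

lemma kron_set:
  assumes "set B \<subseteq> {0,1}" "set C \<subseteq> {0,1}"
  shows "set (kron B C) \<subseteq> {0,1}"
proof
  fix x assume "x \<in> set (kron B C)"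
  then obtain i where i: "i < length B * length C" "x = B ! (i div length C) * C ! (i mod length C)"
    by (auto simp: kron_def)
  have "length C > 0" using i(1) by (cases "length C") auto
  then have "i div length C < length B" "i mod length C < length C" using i(1)
    by (auto simp: div_less_iff_less_mult mult.commute)
  then have "B ! (i div length C) \<in> {0,1}" "C ! (i mod length C) \<in> {0,1}"
    using assms nth_mem by fastforce+
  then show "x \<in> {0,1}" using i by auto
qed

lemma kron_digits:
  assumes "length C > 0"
  shows "digits (kron B C) = (\<lambda>(m,n). m * length C + n) ` (digits B \<times> digits C)"
proof -
  let ?Q = "length C"
  show ?thesis
  proof (rule set_eqI, rule iffI)
    fix i assume "i \<in> digits (kron B C)"
    then have i: "i < length B * ?Q" "B ! (i div ?Q) * C ! (i mod ?Q) = 1"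
      by (auto simp: digits_def kron_def)
    have "i div ?Q < length B" "i mod ?Q < ?Q" using i(1) assms
      by (auto simp: div_less_iff_less_mult mult.commute)
    moreover have "B ! (i div ?Q) = 1" "C ! (i mod ?Q) = 1" using i(2) by auto
    ultimately have "(i div ?Q, i mod ?Q) \<in> digits B \<times> digits C" by (auto simp: digits_def)
    moreover have "i = (i div ?Q) * ?Q + i mod ?Q" by simp
    ultimately show "i \<in> (\<lambda>(m,n). m * ?Q + n) ` (digits B \<times> digits C)" by force
  next
    fix i assume "i \<in> (\<lambda>(m,n). m * ?Q + n) ` (digits B \<times> digits C)"
    then obtain m n where mn: "m < length B" "B ! m = 1" "n < ?Q" "C ! n = 1" "i = m * ?Q + n"
      by (auto simp: digits_def)
    have Q0: "?Q > 0" using mn(3) by linarith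
    have "(m * ?Q + n) div ?Q = m" "(m * ?Q + n) mod ?Q = n" using mn Q0 by (simp_all add: add.commute)
    moreover have "m * ?Q + n < length B * ?Q"
    proof -
      have "m * ?Q + n < m * ?Q + ?Q" using mn by simp
      also have "\<dots> = (Suc m) * ?Q" by simp
      also have "\<dots> \<le> length B * ?Q" using mn by (intro mult_right_mono) auto
      finally show ?thesis .
    qed
    ultimately show "i \<in> digits (kron B C)" using mn by (simp add: digits_def kron_def)
  qed
qed

lemma kron_inj:
  "inj_on (\<lambda>(m,n). m * length C + n) (digits B \<times> digits C)"
proof (rule inj_onI)
  fix x y assume a: "x \<in> digits B \<times> digits C" "y \<in> digits B \<times> digits C"
    and e0: "(\<lambda>(m,n). m * length C + n) x = (\<lambda>(m,n). m * length C + n) y"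
  obtain m n where x: "x = (m,n)" by (cases x)
  obtain m' n' where y: "y = (m',n')" by (cases y)
  have e: "m * length C + n = m' * length C + n'" using e0 x y by simp
  have "n < length C" "n' < length C" using a x y by (auto simp: digits_def)
  moreover have "length C > 0" using calculation by linarith
  ultimately have "(m * length C + n) div length C = m" "(m' * length C + n') div length C = m'"
    "(m * length C + n) mod length C = n" "(m' * length C + n') mod length C = n'" by (simp_all add: add.commute)
  then show "x = y" using e x y by metis
qed

lemma T_kron:
  assumes B: "set B \<subseteq> {0,1}" and C: "set C \<subseteq> {0,1}" and Q: "length C > 0"
  shows "T (kron B C) G t = T B (T C G) t"
proof -
  let ?P = "length B" and ?Q = "length C"
  let ?f = "\<lambda>(m,n). m * ?Q + n"
  have sl: "sum_list (kron B C) = sum_list B * sum_list C"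
    using sum_list_card[OF kron_set[OF B C]] sum_list_card[OF B] sum_list_card[OF C]
      kron_digits[OF Q] card_image[OF kron_inj[of C B]] by (simp add: card_cartesian_product)
  have "(\<Sum>i\<in>digits (kron B C). G (real (length (kron B C)) * t - real i))
      = (\<Sum>i\<in>?f ` (digits B \<times> digits C). G (real (?P * ?Q) * t - real i))"
    by (simp add: kron_digits[OF Q] kron_length)
  also have "\<dots> = (\<Sum>x\<in>digits B \<times> digits C. G (real (?P * ?Q) * t - real (?f x)))"
    by (rule sum.reindex[OF kron_inj, unfolded comp_def])
  also have "\<dots> = (\<Sum>m\<in>digits B. \<Sum>n\<in>digits C. G (real ?Q * (real ?P * t - real m) - real n))"
  proof -
    have "(\<Sum>x\<in>digits B \<times> digits C. G (real (?P * ?Q) * t - real (?f x)))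
        = (\<Sum>(m,n)\<in>digits B \<times> digits C. G (real ?Q * (real ?P * t - real m) - real n))"
      by (rule sum.cong) (auto simp: algebra_simps)
    also have "\<dots> = (\<Sum>m\<in>digits B. \<Sum>n\<in>digits C. G (real ?Q * (real ?P * t - real m) - real n))"
      by (rule sum.cartesian_product[symmetric])
    finally show ?thesis .
  qed
  finally have e: "(\<Sum>i\<in>digits (kron B C). G (real (length (kron B C)) * t - real i))
     = (\<Sum>m\<in>digits B. \<Sum>n\<in>digits C. G (real ?Q * (real ?P * t - real m) - real n))" .
  show ?thesis
    unfolding T_def e sl by (simp add: sum_divide_distrib[symmetric] divide_divide_eq_left mult.commute)
qed

lemma fix_unique:
  fixes D :: "real \<Rightarrow> real" and K :: nat and S :: "nat set"
  assumes S: "finite S" "d1 \<in> S" "d2 \<in> S" "d1 < d2" "\<forall>d\<in>S. d < K"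
    and eq: "\<And>s. D s = (\<Sum>d\<in>S. D (real K * s - real d)) / real (card S)"
    and bnd: "\<And>s. \<bar>D s\<bar> \<le> Bd"
    and lt: "(D \<longlongrightarrow> 0) at_top" and lb: "(D \<longlongrightarrow> 0) at_bot"
  shows "D x = 0"
proof (rule ccontr)
  assume "D x \<noteq> 0"
  define m where "m = (SUP s. \<bar>D s\<bar>)"
  have bdd: "bdd_above (range (\<lambda>s. \<bar>D s\<bar>))" by (rule bdd_aboveI2[where M=Bd], rule bnd)
  have le_m: "\<bar>D s\<bar> \<le> m" for s unfolding m_def by (rule cSUP_upper[OF _ bdd]) simp
  have m0: "m > 0" using le_m[of x] \<open>D x \<noteq> 0\<close> by linarith
  define n where "n = card S"
  have K2: "K \<ge> 2" using S by fastforce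
  have n2: "n \<ge> 2"
  proof -
    have "{d1, d2} \<subseteq> S" using S by auto
    then have "card {d1,d2} \<le> n" unfolding n_def using S(1) by (rule card_mono[rotated])
    then show ?thesis using S(4) by simp
  qed
  have "\<forall>\<^sub>F s in at_top. dist (D s) 0 < m/2" using tendstoD[OF lt, of "m/2"] m0 by simp
  then obtain N1 where N1: "\<And>s. s \<ge> N1 \<Longrightarrow> \<bar>D s\<bar> < m/2" by (auto simp: eventually_at_top_linorder)
  have "\<forall>\<^sub>F s in at_bot. dist (D s) 0 < m/2" using tendstoD[OF lb, of "m/2"] m0 by simp
  then obtain N2 where N2: "\<And>s. s \<le> N2 \<Longrightarrow> \<bar>D s\<bar> < m/2" by (auto simp: eventually_at_bot_linorder)
  define R where "R = \<bar>N1\<bar> + \<bar>N2\<bar>"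
  have far: "\<bar>D s\<bar> < m/2" if "\<bar>s\<bar> > R" for s
    using N1[of s] N2[of s] that unfolding R_def by (cases "s \<ge> 0") auto
  define c where "c = ((real d2 - real d1) / (real K - 1)) / 2"
  have Kr: "real K - 1 > 0" using K2 by simp
  have c0: "c > 0" unfolding c_def using S(4) Kr by simp
  obtain k where k: "(R + 1) / c < real K ^ k" using real_arch_pow[of "real K" "(R+1)/c"] K2 by auto
  have kc: "real K ^ k * c - 1 > R" using k c0 by (simp add: field_simps)
  define \<delta> where "\<delta> = m / (2 * real n ^ k)"
  have n0: "real n > 0" using n2 by simp
  have "m - \<delta> < m" unfolding \<delta>_def using m0 n0 by simp
  then obtain t where t: "m - \<delta> < \<bar>D t\<bar>" unfolding m_def using less_cSUP_iff[OF _ bdd] by auto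
  define p1 where "p1 = real d1 / (real K - 1)"
  define p2 where "p2 = real d2 / (real K - 1)"
  have "p2 - p1 = 2 * c" unfolding p1_def p2_def c_def by (simp only: mult_2 field_sum_of_halves diff_divide_distrib)
  then obtain d where d: "d \<in> S" "\<bar>t - real d / (real K - 1)\<bar> \<ge> c"
    using S(2,3) c0 unfolding p1_def p2_def
    by (cases "\<bar>t - p1\<bar> \<ge> c") (auto simp: p1_def p2_def abs_if split: if_splits)
  define p where "p = real d / (real K - 1)"
  have p01: "0 \<le> p" "p \<le> 1" unfolding p_def using S(5) d(1) Kr by (auto simp: field_simps)
  define s where "s j = p + real K ^ j * (t - p)" for j
  have pK0: "p * (real K - 1) = real d" unfolding p_def using Kr by simp
  have pK: "real K * p - real d = p" using pK0 by (simp add: algebra_simps)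
  have step: "s (Suc j) = real K * s j - real d" for j
  proof -
    have "real K * s j - real d = (real K * p - real d) + real K * real K ^ j * (t - p)"
      unfolding s_def by (simp add: algebra_simps)
    then show ?thesis unfolding s_def using pK by simp
  qed
  have key: "\<bar>D (real K * y - real d)\<bar> \<ge> real n * \<bar>D y\<bar> - (real n - 1) * m" for y
  proof -
    have "real n * D y = (\<Sum>e\<in>S. D (real K * y - real e))" using eq[of y] n0 unfolding n_def by simp
    also have "\<dots> = D (real K * y - real d) + (\<Sum>e\<in>S - {d}. D (real K * y - real e))"
      using S(1) d(1) by (simp add: sum.remove)
    finally have "real n * \<bar>D y\<bar> \<le> \<bar>D (real K * y - real d)\<bar> + \<bar>\<Sum>e\<in>S - {d}. D (real K * y - real e)\<bar>"
      by (metis abs_mult abs_of_nonneg abs_triangle_ineq of_nat_0_le_iff)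
    moreover have "\<bar>\<Sum>e\<in>S - {d}. D (real K * y - real e)\<bar> \<le> (\<Sum>e\<in>S - {d}. m)"
      by (rule order_trans[OF sum_abs]) (intro sum_mono le_m)
    moreover have "(\<Sum>e\<in>S - {d}. m) = (real n - 1) * m"
      using S(1) d(1) n2 unfolding n_def by (simp add: card_Diff_singleton of_nat_diff)
    ultimately show ?thesis by linarith
  qed
  have ind: "\<bar>D (s j)\<bar> \<ge> m - real n ^ j * \<delta>" for j
  proof (induction j)
    case 0 then show ?case using t unfolding s_def by simp
  next
    case (Suc j)
    have "real n * (m - real n ^ j * \<delta>) - (real n - 1) * m \<le> real n * \<bar>D (s j)\<bar> - (real n - 1) * m"
      using Suc n0 by simp
    also have "\<dots> \<le> \<bar>D (s (Suc j))\<bar>" using key[of "s j"] step[of j] by simp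
    finally show ?case by (simp add: algebra_simps)
  qed
  have "\<bar>s k\<bar> > R"
  proof -
    have "real K ^ k * c \<le> real K ^ k * \<bar>t - p\<bar>" using d(2) unfolding p_def by (intro mult_left_mono) auto
    also have "\<dots> = \<bar>s k - p\<bar>" unfolding s_def by (simp add: abs_mult)
    also have "\<dots> \<le> \<bar>s k\<bar> + 1" using p01 by linarith
    finally show ?thesis using kc by linarith
  qed
  then have "\<bar>D (s k)\<bar> < m/2" by (rule far)
  moreover have "m - real n ^ k * \<delta> = m/2" unfolding \<delta>_def using n0 by simp
  ultimately show False using ind[of k] by linarith
qed

definition ssm :: "nat list \<Rightarrow> real measure \<Rightarrow> bool" where
  "ssm B M \<longleftrightarrow> prob_space M \<and> sets M = sets borel \<and>
     (\<forall>A\<in>sets borel. measure M A =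
        (\<Sum>d\<in>digits B. measure M (phi (length B) d -` A)) / real (sum_list B))"

lemma bdv_measure_ssm: "bdv_measure B = (THE M. ssm B M)"
  unfolding bdv_measure_def ssm_def ..

lemma bdv_facts:
  assumes "is_bdv B"
  shows "set B \<subseteq> {0,1}" "length B \<ge> 3" "\<forall>d\<in>digits B. d < length B"
    "real (sum_list B) = real (card (digits B))" "card (digits B) \<ge> 2"
    "\<exists>d1 d2. d1 \<in> digits B \<and> d2 \<in> digits B \<and> d1 < d2"
proof -
  show s: "set B \<subseteq> {0,1}" "length B \<ge> 3" using assms by (auto simp: is_bdv_def)
  show "\<forall>d\<in>digits B. d < length B" by (auto simp: digits_def)
  show "real (sum_list B) = real (card (digits B))" using sum_list_card[OF s(1)] by simp
  show c: "card (digits B) \<ge> 2" using sum_list_card[OF s(1)] assms by (auto simp: is_bdv_def)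
  then obtain x where x: "x \<in> digits B" by fastforce
  have "card (digits B - {x}) \<ge> 1" using c x by (simp add: card_Diff_singleton)
  then have "digits B - {x} \<noteq> {}" by (metis card.empty not_one_le_zero)
  then obtain y where y: "y \<in> digits B" "y \<noteq> x" by blast
  show "\<exists>d1 d2. d1 \<in> digits B \<and> d2 \<in> digits B \<and> d1 < d2"
  proof (cases "x < y")
    case True then show ?thesis using x y by blast
  next
    case False then have "y < x" using y(2) by simp
    then show ?thesis using x y by blast
  qed
qed

lemma fix_unique_B:
  assumes B: "is_bdv B"
    and eq: "\<And>s. D s = T B D s"
    and bnd: "\<And>s. \<bar>D s\<bar> \<le> Bd"
    and lt: "(D \<longlongrightarrow> 0) at_top" and lb: "(D \<longlongrightarrow> 0) at_bot"
  shows "D x = 0"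
proof -
  obtain d1 d2 where d: "d1 \<in> digits B" "d2 \<in> digits B" "d1 < d2" using bdv_facts(6)[OF B] by blast
  show ?thesis
  proof (rule fix_unique[where S="digits B" and K="length B", OF _ d _ _ bnd lt lb])
    show "finite (digits B)" by simp
    show "\<forall>d\<in>digits B. d < length B" by (rule bdv_facts(3)[OF B])
    show "D s = (\<Sum>d\<in>digits B. D (real (length B) * s - real d)) / real (card (digits B))" for s
      using eq[of s] bdv_facts(4)[OF B] unfolding T_def by simp
  qed
qed

lemma T_lim_top:
  assumes B: "is_bdv B" and G: "(G \<longlongrightarrow> a) at_top"
  shows "(T B G \<longlongrightarrow> a) at_top"
proof -
  have K0: "length B > 0" using bdv_facts(2)[OF B] by linarith
  then have K: "real (length B) > 0" by simp
  have fl: "filterlim (\<lambda>t. real (length B) * t - real d) at_top at_top" for d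
  proof (subst filterlim_at_top, intro allI)
    fix Z :: real
    show "\<forall>\<^sub>F x in at_top. Z \<le> real (length B) * x - real d"
      unfolding eventually_at_top_linorder
      by (rule exI[of _ "(Z + real d) / real (length B)"]) (use K in \<open>auto simp: field_simps\<close>)
  qed
  have "((\<lambda>t. (\<Sum>d\<in>digits B. G (real (length B) * t - real d)) / real (sum_list B))
      \<longlongrightarrow> (\<Sum>d\<in>digits B. a) / real (sum_list B)) at_top"
  proof -
    have "real (card (digits B)) \<noteq> 0" using bdv_facts(5)[OF B] by linarith
    then have sl0: "real (sum_list B) \<noteq> 0" unfolding bdv_facts(4)[OF B] .
    show ?thesis by (intro tendsto_divide tendsto_sum filterlim_compose[OF G fl] tendsto_const sl0)
  qed
  moreover have "(\<Sum>d\<in>digits B. a) / real (sum_list B) = a"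
  proof -
    have c: "real (card (digits B)) > 0" using bdv_facts(5)[OF B] by simp
    show ?thesis unfolding bdv_facts(4)[OF B] using c by (simp add: card_gt_0_iff)
  qed
  ultimately show ?thesis unfolding T_def[abs_def] by simp
qed

lemma T_lim_bot:
  assumes B: "is_bdv B" and G: "(G \<longlongrightarrow> a) at_bot"
  shows "(T B G \<longlongrightarrow> a) at_bot"
proof -
  have K0: "length B > 0" using bdv_facts(2)[OF B] by linarith
  then have K: "real (length B) > 0" by simp
  have fl: "filterlim (\<lambda>t. real (length B) * t - real d) at_bot at_bot" for d
  proof (subst filterlim_at_bot, intro allI)
    fix Z :: real
    show "\<forall>\<^sub>F x in at_bot. real (length B) * x - real d \<le> Z"
      unfolding eventually_at_bot_linorder
      by (rule exI[of _ "(Z + real d) / real (length B)"]) (use K in \<open>auto simp: field_simps\<close>)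
  qed
  have "((\<lambda>t. (\<Sum>d\<in>digits B. G (real (length B) * t - real d)) / real (sum_list B))
      \<longlongrightarrow> (\<Sum>d\<in>digits B. a) / real (sum_list B)) at_bot"
  proof -
    have "real (card (digits B)) \<noteq> 0" using bdv_facts(5)[OF B] by linarith
    then have sl0: "real (sum_list B) \<noteq> 0" unfolding bdv_facts(4)[OF B] .
    show ?thesis by (intro tendsto_divide tendsto_sum filterlim_compose[OF G fl] tendsto_const sl0)
  qed
  moreover have "(\<Sum>d\<in>digits B. a) / real (sum_list B) = a"
  proof -
    have c: "real (card (digits B)) > 0" using bdv_facts(5)[OF B] by simp
    show ?thesis unfolding bdv_facts(4)[OF B] using c by (simp add: card_gt_0_iff)
  qed
  ultimately show ?thesis unfolding T_def[abs_def] by simp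
qed

lemma T_bounds:
  assumes B: "is_bdv B" and G: "\<And>x. 0 \<le> G x \<and> G x \<le> 1"
  shows "0 \<le> T B G t \<and> T B G t \<le> 1"
proof -
  have "(\<Sum>d\<in>digits B. G (real (length B) * t - real d)) \<le> (\<Sum>d\<in>digits B. 1)"
    by (intro sum_mono) (use G in auto)
  moreover have "0 \<le> (\<Sum>d\<in>digits B. G (real (length B) * t - real d))"
    by (intro sum_nonneg) (use G in auto)
  ultimately show ?thesis unfolding T_def using bdv_facts(4,5)[OF B] by auto
qed

lemma ssm_rd: "ssm B M \<Longrightarrow> real_distribution M"
  unfolding ssm_def real_distribution_def real_distribution_axioms_def by auto

lemma cdf_fix:
  assumes B: "is_bdv B" and M: "ssm B M"
  shows "cdf M t = T B (cdf M) t"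
proof -
  have K0: "length B > 0" using bdv_facts(2)[OF B] by linarith
  then have K: "real (length B) > 0" by simp
  have pre: "phi (length B) d -` {..t} = {..real (length B) * t - real d}" for d
    using K by (auto simp: phi_def field_simps)
  show ?thesis
    using M unfolding ssm_def T_def cdf_def pre[symmetric] by auto
qed

lemma cdf_props:
  assumes "ssm B M"
  shows "\<And>x. 0 \<le> cdf M x \<and> cdf M x \<le> 1" "(cdf M \<longlongrightarrow> 1) at_top" "(cdf M \<longlongrightarrow> 0) at_bot"
proof -
  interpret real_distribution M using ssm_rd[OF assms] .
  show "\<And>x. 0 \<le> cdf M x \<and> cdf M x \<le> 1" using cdf_nonneg cdf_bounded_prob by auto
  show "(cdf M \<longlongrightarrow> 1) at_top" by (rule cdf_lim_at_top_prob)
  show "(cdf M \<longlongrightarrow> 0) at_bot" by (rule cdf_lim_at_bot)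
qed

lemma cdf_eq_from_fix:
  assumes B: "is_bdv B"
    and F: "\<And>x. 0 \<le> F x \<and> F x \<le> 1" "(F \<longlongrightarrow> 1) at_top" "(F \<longlongrightarrow> 0) at_bot" "\<And>x. F x = T B F x"
    and G: "\<And>x. 0 \<le> G x \<and> G x \<le> 1" "(G \<longlongrightarrow> 1) at_top" "(G \<longlongrightarrow> 0) at_bot" "\<And>x. G x = T B G x"
  shows "F = G"
proof
  fix x
  have eq: "F s - G s = T B (\<lambda>s. F s - G s) s" for s
  proof -
    have "T B (\<lambda>s. F s - G s) s = T B F s - T B G s" by (rule T_diff)
    with F(4)[of s] G(4)[of s] show ?thesis by linarith
  qed
  have bnd: "\<bar>F s - G s\<bar> \<le> 1" for s using F(1)[of s] G(1)[of s] by auto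
  have lt: "((\<lambda>s. F s - G s) \<longlongrightarrow> 0) at_top" using tendsto_diff[OF F(2) G(2)] by simp
  have lb: "((\<lambda>s. F s - G s) \<longlongrightarrow> 0) at_bot" using tendsto_diff[OF F(3) G(3)] by simp
  have "F x - G x = 0"
    using fix_unique_B[OF B, where D="\<lambda>s. F s - G s" and Bd=1, OF eq bnd lt lb] by simp
  then show "F x = G x" by simp
qed

lemma ssm_unique:
  assumes B: "is_bdv B" and M1: "ssm B M1" and M2: "ssm B M2"
  shows "M1 = M2"
proof (rule cdf_unique[OF ssm_rd[OF M1] ssm_rd[OF M2]])
  show "cdf M1 = cdf M2"
    by (rule cdf_eq_from_fix[OF B cdf_props[OF M1] cdf_fix[OF B M1] cdf_props[OF M2] cdf_fix[OF B M2]])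
qed

lemma geo_summable:
  fixes K :: nat and \<omega> :: "nat stream"
  assumes K: "K \<ge> 2"
  shows "summable (\<lambda>j. real (min (\<omega> !! j) K) / real K ^ Suc j)"
proof (rule summable_comparison_test'[where N=0])
  show "summable (\<lambda>j. (1 / real K) ^ j)" using K by (intro summable_geometric) simp
  fix j :: nat
  have Kp: "real K ^ Suc j > 0" using K by simp
  have "real (min (\<omega> !! j) K) / real K ^ Suc j \<le> real K / real K ^ Suc j"
    using Kp by (intro divide_right_mono) auto
  also have "\<dots> = (1 / real K) ^ j" using K by (simp add: power_one_over)
  finally show "norm (real (min (\<omega> !! j) K) / real K ^ Suc j) \<le> (1 / real K) ^ j" by simp
qed

lemma f_cons:
  fixes K :: nat
  assumes K: "K \<ge> 2" and x: "x < K"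
  defines "f \<equiv> \<lambda>\<omega>. (\<Sum>j. real (min (\<omega> !! j) K) / real K ^ Suc j)"
  shows "f (x ## X) = phi K x (f X)"
proof -
  let ?g = "\<lambda>j. real (min ((x ## X) !! j) K) / real K ^ Suc j"
  let ?h = "\<lambda>j. real (min (X !! j) K) / real K ^ Suc j"
  have sg: "summable ?g" by (rule geo_summable[OF K])
  have sh: "summable ?h" by (rule geo_summable[OF K])
  have "suminf ?g = ?g 0 + (\<Sum>j. ?g (Suc j))" using suminf_split_head[OF sg] by simp
  also have "(\<lambda>j. ?g (Suc j)) = (\<lambda>j. ?h j / real K)" by (rule ext) simp
  also have "(\<Sum>j. ?h j / real K) = suminf ?h / real K" by (rule suminf_divide[OF sh])
  also have "?g 0 = real x / real K" using x by simp
  finally show ?thesis unfolding f_def phi_def by (simp add: add_divide_distrib)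
qed

lemma ssm_exists:
  assumes B: "is_bdv B"
  shows "\<exists>M. ssm B M"
proof -
  define K where "K = length B"
  have K: "K \<ge> 2" using bdv_facts(2)[OF B] unfolding K_def by simp
  define Dg where "Dg = digits B"
  have Dne: "Dg \<noteq> {}" "finite Dg" using bdv_facts(5)[OF B] unfolding Dg_def by auto
  have DK: "\<forall>d\<in>Dg. d < K" using bdv_facts(3)[OF B] unfolding Dg_def K_def .
  define p where "p = pmf_of_set Dg"
  define SS where "SS = stream_space (measure_pmf p)"
  define f where "f = (\<lambda>\<omega>::nat stream. (\<Sum>j. real (min (\<omega> !! j) K) / real K ^ Suc j))"
  have fm[measurable]: "f \<in> borel_measurable SS"
    unfolding f_def SS_def by measurable
  have pSS: "prob_space SS" unfolding SS_def by (rule prob_space.prob_space_stream_space[OF measure_pmf.prob_space_axioms])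
  define \<mu> where "\<mu> = distr SS borel f"
  have pmu: "prob_space \<mu>" unfolding \<mu>_def by (rule prob_space.prob_space_distr[OF pSS fm])
  interpret Mu: prob_space \<mu> by (rule pmu)
  have smu: "sets \<mu> = sets borel" unfolding \<mu>_def by simp
  have E: "emeasure \<mu> A = (\<integral>\<^sup>+\<omega>. indicator A (f \<omega>) \<partial>SS)" if A: "A \<in> sets borel" for A
  proof -
    have "emeasure \<mu> A = (\<integral>\<^sup>+x. indicator A x \<partial>\<mu>)" using A smu by simp
    also have "\<dots> = (\<integral>\<^sup>+\<omega>. indicator A (f \<omega>) \<partial>SS)" unfolding \<mu>_def
      using A by (subst nn_integral_distr) auto
    finally show ?thesis .
  qed
  have phim: "phi K x -` A \<in> sets borel" if "A \<in> sets borel" for x A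
  proof -
    have "phi K x \<in> borel_measurable borel" unfolding phi_def by measurable
    from measurable_sets[OF this that] show ?thesis by simp
  qed
  have eqn: "measure \<mu> A = (\<Sum>d\<in>digits B. measure \<mu> (phi (length B) d -` A)) / real (sum_list B)"
    if A: "A \<in> sets borel" for A
  proof -
    have im: "(\<lambda>\<omega>. indicator A (f \<omega>) :: ennreal) \<in> borel_measurable SS"
      by (rule measurable_compose[OF fm]) (rule borel_measurable_indicator[OF A])
    have "emeasure \<mu> A = (\<integral>\<^sup>+x. (\<integral>\<^sup>+X. indicator A (f (x ## X)) \<partial>SS) \<partial>measure_pmf p)"
      unfolding E[OF A] SS_def using im[unfolded SS_def] by (subst prob_space.nn_integral_stream_space[OF measure_pmf.prob_space_axioms]) auto
    also have "\<dots> = (\<Sum>x\<in>Dg. (\<integral>\<^sup>+X. indicator A (f (x ## X)) \<partial>SS)) / of_nat (card Dg)"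
      unfolding p_def by (rule nn_integral_pmf_of_set[OF Dne])
    also have "(\<Sum>x\<in>Dg. (\<integral>\<^sup>+X. indicator A (f (x ## X)) \<partial>SS)) = (\<Sum>x\<in>Dg. emeasure \<mu> (phi K x -` A))"
    proof (rule sum.cong[OF refl])
      fix x assume x: "x \<in> Dg"
      have "(\<integral>\<^sup>+X. indicator A (f (x ## X)) \<partial>SS) = (\<integral>\<^sup>+X. indicator (phi K x -` A) (f X) \<partial>SS)"
        using f_cons[OF K, of x] DK x unfolding f_def by (intro nn_integral_cong) (simp add: indicator_def)
      also have "\<dots> = emeasure \<mu> (phi K x -` A)" using E[OF phim[OF A]] by simp
      finally show "(\<integral>\<^sup>+X. indicator A (f (x ## X)) \<partial>SS) = emeasure \<mu> (phi K x -` A)" .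
    qed
    also have "\<dots> = ennreal (\<Sum>x\<in>Dg. measure \<mu> (phi K x -` A))"
      by (simp add: Mu.emeasure_eq_measure)
    finally have "ennreal (measure \<mu> A) = ennreal (\<Sum>x\<in>Dg. measure \<mu> (phi K x -` A)) / ennreal (real (card Dg))"
      by (simp add: Mu.emeasure_eq_measure ennreal_of_nat_eq_real_of_nat)
    also have "\<dots> = ennreal ((\<Sum>x\<in>Dg. measure \<mu> (phi K x -` A)) / real (card Dg))"
      using Dne by (intro divide_ennreal) (auto intro: sum_nonneg simp: card_gt_0_iff)
    finally have "measure \<mu> A = (\<Sum>x\<in>Dg. measure \<mu> (phi K x -` A)) / real (card Dg)"
      by (subst (asm) ennreal_inj) (auto intro!: sum_nonneg divide_nonneg_nonneg)
    then show ?thesis unfolding Dg_def K_def bdv_facts(4)[OF B] .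
  qed
  have "ssm B \<mu>" unfolding ssm_def using pmu smu eqn by auto
  then show ?thesis by blast
qed

lemma ssm_bdv_measure:
  assumes B: "is_bdv B" shows "ssm B (bdv_measure B)"
proof -
  have "\<exists>!M. ssm B M" using ssm_exists[OF B] ssm_unique[OF B] by blast
  then show ?thesis unfolding bdv_measure_ssm by (rule theI')
qed

theorem lemma2p8:
  fixes L M N :: nat and B1 B2 :: "nat list"
  assumes "is_bdv B1" and "length B1 = N ^ L"
    and "is_bdv B2" and "length B2 = N ^ M"
    and "kron B1 B2 = kron B2 B1"
  shows "bdv_cdf B1 = bdv_cdf B2"
proof -
  note B1 = assms(1) and B2 = assms(3)
  define \<mu>1 where "\<mu>1 = bdv_measure B1"
  define \<mu>2 where "\<mu>2 = bdv_measure B2"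
  have s1: "ssm B1 \<mu>1" unfolding \<mu>1_def by (rule ssm_bdv_measure[OF B1])
  have s2: "ssm B2 \<mu>2" unfolding \<mu>2_def by (rule ssm_bdv_measure[OF B2])
  define F1 where "F1 = cdf \<mu>1"
  define F2 where "F2 = cdf \<mu>2"
  have P1: "\<And>x. 0 \<le> F1 x \<and> F1 x \<le> 1" "(F1 \<longlongrightarrow> 1) at_top" "(F1 \<longlongrightarrow> 0) at_bot"
    unfolding F1_def using cdf_props[OF s1] by auto
  have P2: "\<And>x. 0 \<le> F2 x \<and> F2 x \<le> 1" "(F2 \<longlongrightarrow> 1) at_top" "(F2 \<longlongrightarrow> 0) at_bot"
    unfolding F2_def using cdf_props[OF s2] by auto
  have fix1: "\<And>x. F1 x = T B1 F1 x" unfolding F1_def by (rule cdf_fix[OF B1 s1])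
  have fix2: "\<And>x. F2 x = T B2 F2 x" unfolding F2_def by (rule cdf_fix[OF B2 s2])
  have fix1': "T B1 F1 = F1" using fix1 by (intro ext) simp
  define H where "H = T B2 F1"
  have PH: "\<And>x. 0 \<le> H x \<and> H x \<le> 1" "(H \<longlongrightarrow> 1) at_top" "(H \<longlongrightarrow> 0) at_bot"
    unfolding H_def using T_bounds[OF B2 P1(1)] T_lim_top[OF B2 P1(2)] T_lim_bot[OF B2 P1(3)] by auto
  have l1: "set B1 \<subseteq> {0,1}" "length B1 > 0" using bdv_facts(1,2)[OF B1] by auto
  have l2: "set B2 \<subseteq> {0,1}" "length B2 > 0" using bdv_facts(1,2)[OF B2] by auto
  have fixH: "H x = T B1 H x" for x
  proof -
    have "T B1 H x = T (kron B1 B2) F1 x" unfolding H_def by (rule T_kron[OF l1(1) l2, symmetric])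
    also have "\<dots> = T (kron B2 B1) F1 x" using assms(5) by simp
    also have "\<dots> = T B2 (T B1 F1) x" by (rule T_kron[OF l2(1) l1])
    also have "\<dots> = H x" unfolding H_def fix1' ..
    finally show ?thesis by simp
  qed
  have "F1 = H" by (rule cdf_eq_from_fix[OF B1 P1 fix1 PH fixH])
  then have fix12: "\<And>x. F1 x = T B2 F1 x" unfolding H_def by metis
  have "F1 = F2" by (rule cdf_eq_from_fix[OF B2 P1 fix12 P2 fix2])
  then have "\<mu>1 = \<mu>2" unfolding F1_def F2_def by (rule cdf_unique[OF ssm_rd[OF s1] ssm_rd[OF s2]])
  then show ?thesis unfolding bdv_cdf_def \<mu>1_def \<mu>2_def by simp
qed

end
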